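(* Let $W\subset S$ be a one-dimensional $\mathbb{F}_q$-subspace and $\lambda,\mu$ partitions. Then $$T_{\lambda/\mu}(W)=\begin{cases}(-1)^{|\lambda|-|\mu|}\prod_{s\in\lambda/\mu}\varphi^{c(s)}E_1(W)&\text{if }\mu\subseteq\lambda\text{ and }\lambda/\mu\text{ is a vertical strip},\\ 0&\text{otherwise,}\end{cases}$$ where for a box $s=(i,j)$ (row $i$, column $j$) the content is $c(s)=j-i$.
   Context: Let $q$ be a power of a prime $p$, $S=\mathbb{F}_q[x_1,\dots,x_n]$, $\widehat S=\bigcup_{r\ge0}\mathbb{F}_q[x_1^{q^{-r}},\dots,x_n^{q^{-r}}]$, $\varphi(u)=u^q$ the Frobenius automorphism of $\widehat S$. For a subspace $W\subset S$ of dimension $k$ with basis $w_1,\dots,w_k$ and strictly decreasing nonnegative integers $\alpha_1>\dots>\alpha_k$, $A_\alpha(W)=\det(w_i^{q^{\alpha_j}})_{i,j}$; for a partition $\lambda$ with at most $k$ nonzero parts, $S_\lambda(W)=A_{\lambda+\delta_k}(W)/A_{\delta_k}(W)$, $\delta_k=(k-1,\dots,0)$. $E_r(W)=S_{(1^r)}(W)$ for $0\le r\le k$, $E_r(W)=0$ otherwise (so for $\dim W=1$ with basis $w$, $E_1(W)=w^{q-1}$). For partitions $\lambda,\mu$ with $N=\max\{\ell(\lambda),\ell(\mu)\}$ ($\ell$ = number of nonzero parts), $T_{\lambda/\mu}(W)=\det\big((-1)^{\lambda_i-\mu_j-i+j}\varphi^{\lambda_i-i}E_{\lambda_i-\mu_j-i+j}(W)\big)_{1\le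 i,j\le N}$. $\mu\subseteq\lambda$ means $\mu_i\le\lambda_i$ for all $i$; the skew diagram $\lambda/\mu$ is the set of boxes $(i,j)$ with $\mu_i<j\le\lambda_i$; it is a vertical strip if no two of its boxes lie in the same row, i.e. $0\le\lambda_i-\mu_i\le1$ for all $i$. *)

theory Defs
  imports "HOL-Library.Poly_Mapping" "Jordan_Normal_Form.Determinant"
begin

text \<open>Ambient ring: finitely supported F_q-linear combinations of monomials
  x_0^e_0 ... with nonnegative rational exponents (variables indexed 0..n-1).
  The coefficient field F_q is a finite field type 'a, q = CARD('a).\<close>
type_synonym 'a hpoly = "(nat \<Rightarrow>\<^sub>0 rat) \<Rightarrow>\<^sub>0 'a"

text \<open>S = F_q[x_1,...,x_n]: only integer (natural) exponents.\<close>
definition polyS :: "nat \<Rightarrow> 'a::zero hpoly set" where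
  "polyS n = {f. \<forall>m\<in>Poly_Mapping.keys f. \<forall>i\<in>Poly_Mapping.keys m. i < n \<and> Poly_Mapping.lookup m i \<in> \<nat>}"

text \<open>S-hat = union over r of F_q[x_1^(q^-r),...,x_n^(q^-r)].\<close>
definition polyShat :: "nat \<Rightarrow> nat \<Rightarrow> 'a::zero hpoly set" where
  "polyShat q n = {f. \<forall>m\<in>Poly_Mapping.keys f. \<forall>i\<in>Poly_Mapping.keys m. i < n \<and> Poly_Mapping.lookup m i \<ge> 0 \<and>
      (\<exists>r::nat. Poly_Mapping.lookup m i * of_nat q ^ r \<in> \<int>)}"

text \<open>phi^a on S-hat, a an integer: phi(u) = u^q, negative powers are inverses.\<close>
definition frob :: "nat \<Rightarrow> nat \<Rightarrow> int \<Rightarrow> 'a::comm_ring_1 hpoly \<Rightarrow> 'a hpoly" where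
  "frob q n a u = (if a \<ge> 0 then u ^ (q ^ nat a)
     else (THE v. v \<in> polyShat q n \<and> v ^ (q ^ nat (- a)) = u))"

text \<open>E_r(W) for a one-dimensional W with basis w: E_0 = 1, E_1 = w^(q-1), else 0.\<close>
definition E1dim :: "nat \<Rightarrow> 'a::comm_ring_1 hpoly \<Rightarrow> int \<Rightarrow> 'a hpoly" where
  "E1dim q w r = (if r = 0 then 1 else if r = 1 then w ^ (q - 1) else 0)"

text \<open>Partitions: lists of positive parts, weakly decreasing; parts are 1-indexed.\<close>
definition is_partition :: "nat list \<Rightarrow> bool" where
  "is_partition la \<longleftrightarrow> (\<forall>i. Suc i < length la \<longrightarrow> la ! Suc i \<le> la ! i) \<and> (\<forall>x\<in>set la. 0 < x)"

definition part :: "nat list \<Rightarrow> nat \<Rightarrow> nat" where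
  "part la i = (if 1 \<le> i \<and> i \<le> length la then la ! (i - 1) else 0)"

definition size_part :: "nat list \<Rightarrow> nat" where
  "size_part la = sum_list la"

definition subpart :: "nat list \<Rightarrow> nat list \<Rightarrow> bool" where
  "subpart mu la \<longleftrightarrow> (\<forall>i. part mu i \<le> part la i)"

text \<open>Boxes (i,j) (row i, column j) of the skew diagram la/mu.\<close>
definition skew :: "nat list \<Rightarrow> nat list \<Rightarrow> (nat \<times> nat) set" where
  "skew la mu = {(i, j). 1 \<le> i \<and> part mu i < j \<and> j \<le> part la i}"

definition vertical_strip :: "nat list \<Rightarrow> nat list \<Rightarrow> bool" where
  "vertical_strip la mu \<longleftrightarrow>
     (\<forall>i j j'. (i, j) \<in> skew la mu \<longrightarrow> (i, j') \<in> skew la mu \<longrightarrow> j = j')"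

definition content :: "nat \<times> nat \<Rightarrow> int" where
  "content s = int (snd s) - int (fst s)"

definition Tskew :: "nat \<Rightarrow> nat \<Rightarrow> 'a::comm_ring_1 hpoly \<Rightarrow> nat list \<Rightarrow> nat list \<Rightarrow> 'a hpoly" where
  "Tskew q n w la mu = (let N = max (length la) (length mu) in
     det (mat N N (\<lambda>(i, j).
       let r = int (part la (Suc i)) - int (part mu (Suc j)) - int (Suc i) + int (Suc j)
       in (if even r then 1 else -1) *
          frob q n (int (part la (Suc i)) - int (Suc i)) (E1dim q w r))))"

end

theory Submission
  imports Defs
begin

lemma lookup_mult_extremal:
  fixes f g :: "('k::{ordered_cancel_comm_monoid_add, linorder}) \<Rightarrow>\<^sub>0 ('a::idom)"
  assumes H: "\<And>a b. a \<in> Poly_Mapping.keys f \<Longrightarrow> b \<in> Poly_Mapping.keys g \<Longrightarrow> a + b = M + M' \<Longrightarrow> a = M \<and> b = M'"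
  shows "Poly_Mapping.lookup (f * g) (M + M') = Poly_Mapping.lookup f M * Poly_Mapping.lookup g M'"
proof -
  define f1 where "f1 = f - Poly_Mapping.single M (Poly_Mapping.lookup f M)"
  define g1 where "g1 = g - Poly_Mapping.single M' (Poly_Mapping.lookup g M')"
  have kf1: "Poly_Mapping.keys f1 \<subseteq> Poly_Mapping.keys f - {M}"
  proof
    fix x assume "x \<in> Poly_Mapping.keys f1"
    thus "x \<in> Poly_Mapping.keys f - {M}"
      by (cases "x = M") (auto simp: f1_def in_keys_iff lookup_minus lookup_single_not_eq)
  qed
  have kg1: "Poly_Mapping.keys g1 \<subseteq> Poly_Mapping.keys g - {M'}"
  proof
    fix x assume "x \<in> Poly_Mapping.keys g1"
    thus "x \<in> Poly_Mapping.keys g - {M'}"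
      by (cases "x = M'") (auto simp: g1_def in_keys_iff lookup_minus lookup_single_not_eq)
  qed
  have fg: "f * g = Poly_Mapping.single M (Poly_Mapping.lookup f M) * Poly_Mapping.single M' (Poly_Mapping.lookup g M') + f1 * g + Poly_Mapping.single M (Poly_Mapping.lookup f M) * g1"
    by (simp add: f1_def g1_def algebra_simps)
  have z1: "Poly_Mapping.lookup (f1 * g) (M + M') = 0"
  proof (rule ccontr)
    assume "Poly_Mapping.lookup (f1 * g) (M + M') \<noteq> 0"
    hence "M + M' \<in> Poly_Mapping.keys (f1 * g)" by (simp add: in_keys_iff)
    with keys_mult obtain a b where "a \<in> Poly_Mapping.keys f1" "b \<in> Poly_Mapping.keys g" "M + M' = a + b" by blast
    with kf1 H[of a b] show False by auto
  qed
  have z2: "Poly_Mapping.lookup (Poly_Mapping.single M (Poly_Mapping.lookup f M) * g1) (M + M') = 0"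
  proof (rule ccontr)
    assume "Poly_Mapping.lookup (Poly_Mapping.single M (Poly_Mapping.lookup f M) * g1) (M + M') \<noteq> 0"
    hence "M + M' \<in> Poly_Mapping.keys (Poly_Mapping.single M (Poly_Mapping.lookup f M) * g1)" by (simp add: in_keys_iff)
    with keys_mult obtain a b where ab: "a \<in> Poly_Mapping.keys (Poly_Mapping.single M (Poly_Mapping.lookup f M))" "b \<in> Poly_Mapping.keys g1" "M + M' = a + b" by blast
    hence "a = M" by (cases "Poly_Mapping.lookup f M = 0") auto
    moreover have "M \<in> Poly_Mapping.keys f" using ab(1) by (cases "Poly_Mapping.lookup f M = 0") (auto simp: in_keys_iff)
    ultimately show False using ab kg1 H[of M b] by auto
  qed
  show ?thesis unfolding fg by (simp add: lookup_add z1 z2 mult_single)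
qed

lemma unit_single:
  fixes f g :: "('k::linordered_ab_group_add) \<Rightarrow>\<^sub>0 ('a::idom)"
  assumes "f * g = 1"
  shows "\<exists>m c. f = Poly_Mapping.single m c"
proof -
  have f0: "f \<noteq> 0" and g0: "g \<noteq> 0" using assms by auto
  hence ne: "Poly_Mapping.keys f \<noteq> {}" "Poly_Mapping.keys g \<noteq> {}" by (metis keys_eq_empty)+
  define M where "M = Max (Poly_Mapping.keys f)"
  define M' where "M' = Max (Poly_Mapping.keys g)"
  define m where "m = Min (Poly_Mapping.keys f)"
  define m' where "m' = Min (Poly_Mapping.keys g)"
  have inM: "M \<in> Poly_Mapping.keys f" "M' \<in> Poly_Mapping.keys g" "m \<in> Poly_Mapping.keys f" "m' \<in> Poly_Mapping.keys g"
    using ne by (auto simp: M_def M'_def m_def m'_def)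
  have le: "\<And>a. a \<in> Poly_Mapping.keys f \<Longrightarrow> m \<le> a \<and> a \<le> M" "\<And>b. b \<in> Poly_Mapping.keys g \<Longrightarrow> m' \<le> b \<and> b \<le> M'"
    by (auto simp: M_def M'_def m_def m'_def)
  have "Poly_Mapping.lookup (f * g) (M + M') = Poly_Mapping.lookup f M * Poly_Mapping.lookup g M'"
  proof (rule lookup_mult_extremal)
    fix a b assume "a \<in> Poly_Mapping.keys f" "b \<in> Poly_Mapping.keys g" "a + b = M + M'"
    hence a: "a \<le> M" and b: "b \<le> M'" and e: "a + b = M + M'" using le by auto
    have "\<not> a < M" using add_less_le_mono[of a M b M'] b e by auto
    moreover have "\<not> b < M'" using add_le_less_mono[of a M b M'] a e by auto
    ultimately show "a = M \<and> b = M'" using a b by auto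
  qed
  moreover have "Poly_Mapping.lookup f M * Poly_Mapping.lookup g M' \<noteq> 0" using inM by (simp add: in_keys_iff)
  ultimately have "M + M' \<in> Poly_Mapping.keys (f * g)" by (simp add: in_keys_iff)
  hence s1: "M + M' = 0" using assms by simp
  have "Poly_Mapping.lookup (f * g) (m + m') = Poly_Mapping.lookup f m * Poly_Mapping.lookup g m'"
  proof (rule lookup_mult_extremal)
    fix a b assume "a \<in> Poly_Mapping.keys f" "b \<in> Poly_Mapping.keys g" "a + b = m + m'"
    hence a: "m \<le> a" and b: "m' \<le> b" and e: "a + b = m + m'" using le by auto
    have "\<not> m < a" using add_less_le_mono[of m a m' b] b e by auto
    moreover have "\<not> m' < b" using add_le_less_mono[of m a m' b] a e by auto
    ultimately show "a = m \<and> b = m'" using a b by auto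
  qed
  moreover have "Poly_Mapping.lookup f m * Poly_Mapping.lookup g m' \<noteq> 0" using inM by (simp add: in_keys_iff)
  ultimately have "m + m' \<in> Poly_Mapping.keys (f * g)" by (simp add: in_keys_iff)
  hence s2: "m + m' = 0" using assms by simp
  have "m \<le> M" "m' \<le> M'" using le inM by auto
  hence "M = m" using s1 s2 add_less_le_mono[of m M m' M'] by (cases "m < M") auto
  hence keys1: "Poly_Mapping.keys f = {M}" using le inM by (auto intro: order.antisym)
  have "f = Poly_Mapping.single M (Poly_Mapping.lookup f M)"
  proof (rule poly_mapping_eqI)
    fix k show "Poly_Mapping.lookup f k = Poly_Mapping.lookup (Poly_Mapping.single M (Poly_Mapping.lookup f M)) k"
      using keys1 not_in_keys_iff_lookup_eq_zero[of k f] by (cases "k = M") (auto simp: lookup_single_not_eq)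
  qed
  thus ?thesis by blast
qed

lemma power_card_same:
  fixes x :: "'a::{field,finite}"
  shows "x ^ card (UNIV :: 'a set) = x"
proof (cases "x = 0")
  case False
  have "x * (\<Prod>y\<in>UNIV-{0}. x * y) = x * x ^ (card (UNIV :: 'a set) - 1) * \<Prod>(UNIV-{0})"
    by (simp add: prod.distrib mult_ac)
  also have "x * x ^ (card (UNIV :: 'a set) - 1) = x ^ Suc (card (UNIV :: 'a set) - 1)"
    by (subst power_Suc) auto
  also have "Suc (card (UNIV :: 'a set) - 1) = card (UNIV :: 'a set)"
    using finite_UNIV_card_ge_0[where ?'a = 'a] by simp
  also have "(\<Prod>y\<in>UNIV-{0}. x * y) = (\<Prod>y\<in>UNIV-{0}. y)"
    by (rule prod.reindex_bij_witness[of _ "\<lambda>y. y / x" "\<lambda>y. x * y"]) (use False in auto)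
  finally show ?thesis
    by simp
qed (use finite_UNIV_card_ge_0[where ?'a = 'a] in auto)

lemma power_card_pow_same:
  fixes x :: "'a::{field,finite}"
  shows "x ^ (card (UNIV :: 'a set) ^ k) = x"
proof (induction k)
  case (Suc k)
  have "x ^ (card (UNIV :: 'a set) ^ Suc k) = (x ^ (card (UNIV :: 'a set) ^ k)) ^ card (UNIV :: 'a set)"
    unfolding power_Suc2 power_mult ..
  also have "\<dots> = x" using Suc power_card_same by simp
  finally show ?case .
qed simp

lemma single_power:
  "Poly_Mapping.single m (c::'a::comm_semiring_1) ^ N = Poly_Mapping.single (\<Sum>i<N. (m::'k::comm_monoid_add)) (c ^ N)"
  by (induction N) (simp_all add: mult_single add.commute)

lemma sum_const_zero_imp:
  fixes m :: "'k::linordered_ab_group_add" and N :: nat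
  assumes "N > 0" "(\<Sum>i<N. m) = 0"
  shows "m = 0"
proof (rule ccontr)
  assume m: "m \<noteq> 0"
  show False
  proof (cases "m > 0")
    case True
    hence "0 < (\<Sum>i<N. m)" using assms(1) by (intro sum_pos) auto
    thus False using assms(2) by simp
  next
    case False
    hence "0 < -m" using m by simp
    hence "0 < (\<Sum>i<N. -m)" using assms(1) by (intro sum_pos) auto
    thus False using assms(2) by (simp add: sum_negf)
  qed
qed

lemma root_unity_hpoly:
  fixes v :: "'a::{field,finite} hpoly"
  assumes "v ^ (card (UNIV :: 'a set) ^ k) = 1"
  shows "v = 1"
proof -
  define N where "N = card (UNIV :: 'a set) ^ k"
  have N0: "N > 0" unfolding N_def using finite_UNIV_card_ge_0[where ?'a = 'a] by simp
  have "v * v ^ (N - 1) = v ^ N" using N0 by (cases N) simp_all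
  hence "v * v ^ (N - 1) = 1" using assms unfolding N_def by simp
  then obtain m c where v: "v = Poly_Mapping.single m c" using unit_single by blast
  have e: "Poly_Mapping.single (\<Sum>i<N. m) (c ^ N) = Poly_Mapping.single 0 1"
  proof -
    have "v ^ N = Poly_Mapping.single (\<Sum>i<N. m) (c ^ N)" by (simp add: v single_power)
    thus ?thesis using assms unfolding N_def by simp
  qed
  have "c ^ N \<noteq> 0"
  proof
    assume "c ^ N = 0"
    hence "Poly_Mapping.single 0 (1::'a) = 0" using e unfolding \<open>c ^ N = 0\<close> single_zero by simp
    thus False by (metis lookup_single_eq lookup_zero zero_neq_one)
  qed
  have s0: "(\<Sum>i<N. m) = 0"
  proof (rule ccontr)
    assume "(\<Sum>i<N. m) \<noteq> 0"
    hence "Poly_Mapping.lookup (Poly_Mapping.single (\<Sum>i<N. m) (c ^ N)) 0 = 0"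
      by (simp add: lookup_single_not_eq)
    thus False using e by simp
  qed
  hence m0: "m = 0" using sum_const_zero_imp N0 by blast
  have "c ^ N = 1"
    using arg_cong[OF e[unfolded s0], of "\<lambda>p. Poly_Mapping.lookup p 0"] by simp
  moreover have "c ^ N = c" unfolding N_def by (rule power_card_pow_same)
  ultimately have "c = 1" by simp
  thus ?thesis using v m0 by simp
qed

lemma polyShat_0: "0 \<in> polyShat q n"
  by (simp add: polyShat_def)

lemma polyShat_1: "1 \<in> polyShat q n"
  by (simp add: polyShat_def flip: single_one)

lemma frob_zero:
  "frob (card (UNIV :: 'a set)) n a (0 :: 'a::{field,finite} hpoly) = 0"
proof (cases "a \<ge> 0")
  case True
  thus ?thesis using finite_UNIV_card_ge_0[where ?'a = 'a] by (simp add: frob_def)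
next
  case False
  have "(THE v. v \<in> polyShat (card (UNIV :: 'a set)) n \<and> v ^ (card (UNIV :: 'a set) ^ nat (- a)) = (0 :: 'a hpoly)) = 0"
    by (rule the_equality) (use finite_UNIV_card_ge_0[where ?'a = 'a] polyShat_0 in auto)
  thus ?thesis using False by (simp add: frob_def)
qed

lemma frob_one:
  "frob (card (UNIV :: 'a set)) n a (1 :: 'a::{field,finite} hpoly) = 1"
proof (cases "a \<ge> 0")
  case True
  thus ?thesis by (simp add: frob_def)
next
  case False
  have "(THE v. v \<in> polyShat (card (UNIV :: 'a set)) n \<and> v ^ (card (UNIV :: 'a set) ^ nat (- a)) = (1 :: 'a hpoly)) = 1"
    by (rule the_equality) (use polyShat_1 root_unity_hpoly in auto)
  thus ?thesis using False by (simp add: frob_def)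
qed

lemma det_only_id:
  assumes m: "A \<in> carrier_mat n n"
    and Z: "\<And>p. p permutes {0..<n} \<Longrightarrow> p \<noteq> id \<Longrightarrow> \<exists>i<n. A $$ (i, p i) = 0"
  shows "det A = (\<Prod>i = 0..<n. A $$ (i, i))"
proof -
  note det_def = det_def'[OF m]
  let ?U = "{0..<n}"
  let ?PU = "{p. p permutes ?U}"
  let ?pp = "\<lambda>p. signof p * (\<Prod> i = 0 ..< n. A $$ (i, p i))"
  have fU: "finite ?U"
    by simp
  from finite_permutations[OF fU] have fPU: "finite ?PU" .
  have id0: "{id} \<subseteq> ?PU"
    by (auto simp add: permutes_id)
  have p0: "?pp p = 0" if p: "p \<in> ?PU - {id}" for p
  proof -
    from p have pU: "p permutes ?U" and pid: "p \<noteq> id"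
      by blast+
    from Z[OF pU pid] obtain i where "i < n" "A $$ (i, p i) = 0" by blast
    hence "(\<Prod> i = 0 ..< n. A $$ (i, p i)) = 0"
      by (intro prod_zero) auto
    thus ?thesis by simp
  qed
  have "det A = (\<Sum> p \<in> ?PU. ?pp p)" unfolding det_def by auto
  also have "\<dots> = ?pp id + (\<Sum> p \<in> ?PU - {id}. ?pp p)"
    by (rule sum.remove, insert id0 fPU m, auto simp: p0)
  also have "(\<Sum> p \<in> ?PU - {id}. ?pp p) = 0"
    by (rule sum.neutral, insert fPU, auto simp: p0)
  finally show ?thesis by simp
qed

lemma perm_inversion:
  assumes pU: "p permutes {0..<(n::nat)}" and pid: "p \<noteq> id"
  shows "\<exists>i k. i < k \<and> k < n \<and> p k < p i"
proof -
  have "\<not> (\<forall>i\<in>{0..<n}. p i \<ge> i)"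
    using permutes_natset_ge[OF pU] pid by blast
  then obtain k where k: "k < n" "p k < k" by auto
  have inj: "inj_on p {0..<k}"
    using permutes_inj[OF pU] by (auto intro: inj_on_subset)
  show ?thesis
  proof (rule ccontr)
    assume "\<not> ?thesis"
    hence "\<forall>j<k. p j \<le> p k" using k by fastforce
    moreover have "\<forall>j<k. p j \<noteq> p k"
      using permutes_inj[OF pU] k by (metis inj_eq less_irrefl)
    ultimately have "p ` {0..<k} \<subseteq> {0..<p k}" by fastforce
    from card_inj_on_le[OF inj this] have "k \<le> p k" by simp
    thus False using k by simp
  qed
qed

lemma part_mono:
  assumes P: "is_partition la" and i: "1 \<le> i" and ik: "i \<le> K"
  shows "part la K \<le> part la i"
  using ik
proof (induction K rule: dec_induct)
  case base
  then show ?case by simp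
next
  case (step k)
  have "part la (Suc k) \<le> part la k"
  proof (cases "Suc k \<le> length la")
    case True
    have A: "\<forall>j. Suc j < length la \<longrightarrow> la ! Suc j \<le> la ! j" using P by (simp add: is_partition_def)
    have "la ! Suc (k - 1) \<le> la ! (k - 1)"
      using A[rule_format, of "k - 1"] True step.hyps i by simp
    moreover have "Suc (k - 1) = k" using step.hyps i by simp
    ultimately show ?thesis using True step.hyps i by (simp add: part_def)
  next
    case False
    thus ?thesis by (simp add: part_def)
  qed
  thus ?case using step.IH by simp
qed

lemma part_0[simp]: "part la 0 = 0"
  by (simp add: part_def)

lemma part_beyond: "length la < i \<Longrightarrow> part la i = 0"
  by (simp add: part_def)

lemma size_part_sum:
  assumes "length la \<le> N"
  shows "size_part la = (\<Sum>i\<in>{0..<N}. part la (Suc i))"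
proof -
  have "size_part la = (\<Sum>i\<in>{0..<length la}. la ! i)"
    unfolding size_part_def by (rule sum_list_sum_nth)
  also have "\<dots> = (\<Sum>i\<in>{0..<length la}. part la (Suc i))"
    by (rule sum.cong) (auto simp: part_def)
  also have "\<dots> = (\<Sum>i\<in>{0..<N}. part la (Suc i))"
    by (rule sum.mono_neutral_left) (use assms in \<open>auto simp: part_def\<close>)
  finally show ?thesis .
qed

theorem mainTheorem4:
  fixes w :: "('a::{field,finite}) hpoly" and n :: nat and la mu :: "nat list"
  assumes "w \<in> polyS n" and "w \<noteq> 0"
    and "is_partition la" and "is_partition mu"
  shows "Tskew (card (UNIV :: 'a set)) n w la mu =
    (if subpart mu la \<and> vertical_strip la mu
     then (-1) ^ (size_part la - size_part mu) *
          (\<Prod>s\<in>skew la mu. frob (card (UNIV :: 'a set)) n (content s) (E1dim (card (UNIV :: 'a set)) w 1))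
     else 0)"
proof -
  let ?q = "card (UNIV :: 'a set)"
  define N where "N = max (length la) (length mu)"
  define r where "r i j = int (part la (Suc i)) - int (part mu (Suc j)) - int (Suc i) + int (Suc j)" for i j
  define ent where "ent i j = (if even (r i j) then 1 else -1) *
      frob ?q n (int (part la (Suc i)) - int (Suc i)) (E1dim ?q w (r i j))" for i j
  have T: "Tskew ?q n w la mu = det (mat N N (\<lambda>(i,j). ent i j))"
    unfolding Tskew_def N_def ent_def r_def Let_def by simp
  have ent0: "ent i j = 0" if "r i j \<noteq> 0" "r i j \<noteq> 1" for i j
    using that by (simp add: ent_def E1dim_def frob_zero)
  have mono_la: "part la (Suc k) \<le> part la (Suc i)" if "i \<le> k" for i k
    using part_mono[OF assms(3)] that by simp
  have mono_mu: "part mu (Suc k) \<le> part mu (Suc i)" if "i \<le> k" for i k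
    using part_mono[OF assms(4)] that by simp
  have D: "det (mat N N (\<lambda>(i,j). ent i j)) = (\<Prod>i=0..<N. ent i i)"
  proof -
    have "det (mat N N (\<lambda>(i,j). ent i j)) = (\<Prod>i=0..<N. mat N N (\<lambda>(i,j). ent i j) $$ (i,i))"
    proof (rule det_only_id)
      show "mat N N (\<lambda>(i,j). ent i j) \<in> carrier_mat N N" by simp
    next
      fix p assume pU: "p permutes {0..<N}" and pid: "p \<noteq> id"
      obtain i k where ik: "i < k" "k < N" "p k < p i" using perm_inversion[OF pU pid] by blast
      have piN: "p i < N" "p k < N" using permutes_in_image[OF pU] ik by auto
      have "ent i (p i) = 0 \<or> ent k (p k) = 0"
      proof (rule ccontr)
        assume "\<not> ?thesis"
        hence r1: "r i (p i) = 0 \<or> r i (p i) = 1" and r2: "r k (p k) = 0 \<or> r k (p k) = 1"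
          using ent0 by blast+
        have "part la (Suc k) \<le> part la (Suc i)" using mono_la ik by simp
        moreover have "part mu (Suc (p i)) \<le> part mu (Suc (p k))" using mono_mu ik by simp
        ultimately show False using ik r1 r2 unfolding r_def by linarith
      qed
      moreover have "mat N N (\<lambda>(i,j). ent i j) $$ (i, p i) = ent i (p i)" using ik piN by simp
      moreover have "mat N N (\<lambda>(i,j). ent i j) $$ (k, p k) = ent k (p k)" using ik piN by simp
      ultimately show "\<exists>i<N. mat N N (\<lambda>(i,j). ent i j) $$ (i, p i) = 0" using ik
        by (metis order.strict_trans)
    qed
    also have "\<dots> = (\<Prod>i=0..<N. ent i i)" by (rule prod.cong) auto
    finally show ?thesis .
  qed
  show ?thesis
  proof (cases "subpart mu la \<and> vertical_strip la mu")
    case True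
    have bnd: "part mu (Suc i) \<le> part la (Suc i) \<and> part la (Suc i) \<le> Suc (part mu (Suc i))" for i
    proof -
      have "part mu (Suc i) \<le> part la (Suc i)" using True by (simp add: subpart_def)
      moreover have "part la (Suc i) \<le> Suc (part mu (Suc i))"
      proof (rule ccontr)
        assume "\<not> ?thesis"
        hence "(Suc i, Suc (part mu (Suc i))) \<in> skew la mu" "(Suc i, Suc (Suc (part mu (Suc i)))) \<in> skew la mu"
          by (auto simp: skew_def)
        hence "Suc (part mu (Suc i)) = Suc (Suc (part mu (Suc i)))" using True unfolding vertical_strip_def by blast
        thus False by simp
      qed
      ultimately show ?thesis by simp
    qed
    define D where "D = {i\<in>{0..<N}. part la (Suc i) = Suc (part mu (Suc i))}"
    define X where "X i = frob ?q n (int (part la (Suc i)) - int (Suc i)) (E1dim ?q w 1)" for i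
    have DN: "D \<subseteq> {0..<N}" unfolding D_def by auto
    have diag: "ent i i = (if i \<in> D then - X i else 1)" if "i < N" for i
    proof (cases "i \<in> D")
      case True
      hence "r i i = 1" unfolding D_def r_def by auto
      thus ?thesis using True by (simp add: ent_def X_def)
    next
      case False
      hence "r i i = 0" using bnd[of i] that unfolding D_def r_def by auto
      thus ?thesis using False by (simp add: ent_def E1dim_def frob_one)
    qed
    have filt: "{x \<in> {0..<N}. x \<in> D} = D" using DN by auto
    have "(\<Prod>i=0..<N. ent i i) = (\<Prod>i=0..<N. if i \<in> D then - X i else 1)"
      by (rule prod.cong) (auto simp: diag)
    also have "\<dots> = (\<Prod>i\<in>D. - X i)"
      using prod.inter_filter[of "{0..<N}" "\<lambda>i. - X i" "\<lambda>i. i \<in> D"] filt by simp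
    also have "\<dots> = (-1) ^ card D * (\<Prod>i\<in>D. X i)" by (rule prod_uminus)
    finally have LHS: "(\<Prod>i=0..<N. ent i i) = (-1) ^ card D * (\<Prod>i\<in>D. X i)" .
    have sk: "skew la mu = (\<lambda>i. (Suc i, part la (Suc i))) ` D"
    proof
      show "skew la mu \<subseteq> (\<lambda>i. (Suc i, part la (Suc i))) ` D"
      proof
        fix s assume "s \<in> skew la mu"
        then obtain a b where s: "s = (a, b)" "1 \<le> a" "part mu a < b" "b \<le> part la a"
          unfolding skew_def by auto
        define i where "i = a - 1"
        have ai: "a = Suc i" using s unfolding i_def by simp
        have b: "b = part la (Suc i)" "part la (Suc i) = Suc (part mu (Suc i))"
          using bnd[of i] s ai by auto
        have "0 < part la a" using s by simp
        hence "a \<le> length la" by (auto simp: part_def split: if_splits)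
        hence "i < N" using ai by (simp add: N_def)
        hence "i \<in> D" using b unfolding D_def by simp
        thus "s \<in> (\<lambda>i. (Suc i, part la (Suc i))) ` D" using s ai b by auto
      qed
    next
      show "(\<lambda>i. (Suc i, part la (Suc i))) ` D \<subseteq> skew la mu"
        unfolding D_def skew_def by auto
    qed
    have injD: "inj_on (\<lambda>i. (Suc i, part la (Suc i))) D" by (auto simp: inj_on_def)
    have RHSp: "(\<Prod>s\<in>skew la mu. frob ?q n (content s) (E1dim ?q w 1)) = (\<Prod>i\<in>D. X i)"
      unfolding sk by (subst prod.reindex[OF injD]) (simp add: content_def X_def o_def)
    have sz: "size_part la - size_part mu = card D"
    proof -
      have sla: "size_part la = (\<Sum>i\<in>{0..<N}. part la (Suc i))" by (rule size_part_sum) (simp add: N_def)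
      have smu: "size_part mu = (\<Sum>i\<in>{0..<N}. part mu (Suc i))" by (rule size_part_sum) (simp add: N_def)
      have "(\<Sum>i\<in>{0..<N}. part la (Suc i)) - (\<Sum>i\<in>{0..<N}. part mu (Suc i))
          = (\<Sum>i\<in>{0..<N}. part la (Suc i) - part mu (Suc i))"
        by (rule sum_subtractf_nat[symmetric]) (use bnd in auto)
      also have "\<dots> = (\<Sum>i\<in>{0..<N}. if i \<in> D then 1 else 0)"
      proof (rule sum.cong)
        fix i assume "i \<in> {0..<N}"
        thus "part la (Suc i) - part mu (Suc i) = (if i \<in> D then 1 else 0)"
          using bnd[of i] unfolding D_def by auto
      qed simp
      also have "\<dots> = card ({0..<N} \<inter> D)"
        by (simp add: sum.If_cases)
      also have "\<dots> = card D" using DN by (simp add: Int_absorb1)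
      finally show ?thesis using sla smu by simp
    qed
    show ?thesis using True T D LHS RHSp sz by simp
  next
    case False
    obtain i where i: "i < N" "r i i \<noteq> 0" "r i i \<noteq> 1"
    proof -
      from False have "\<not> subpart mu la \<or> \<not> vertical_strip la mu" by simp
      thus thesis
      proof
        assume "\<not> subpart mu la"
        then obtain a where a: "part la a < part mu a" by (auto simp: subpart_def not_le)
        hence a0: "a \<noteq> 0" by (cases "a = 0") auto
        have "0 < part mu a" using a by simp
        hence "a \<le> length mu" by (auto simp: part_def split: if_splits)
        hence "a - 1 < N" using a0 by (simp add: N_def)
        moreover have "r (a - 1) (a - 1) = int (part la a) - int (part mu a)"
          using a0 by (simp add: r_def)
        ultimately show thesis using that a by fastforce
      next
        assume "\<not> vertical_strip la mu"
        then obtain a j j' where "(a, j) \<in> skew la mu" "(a, j') \<in> skew la mu" "j \<noteq> j'"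
          unfolding vertical_strip_def by blast
        hence a: "1 \<le> a" "part mu a + 2 \<le> part la a" unfolding skew_def by auto
        hence "a \<le> length la" by (auto simp: part_def split: if_splits)
        hence "a - 1 < N" using a by (simp add: N_def)
        moreover have "r (a - 1) (a - 1) = int (part la a) - int (part mu a)"
          using a by (simp add: r_def)
        ultimately show thesis using that a by fastforce
      qed
    qed
    have "ent i i = 0" using i ent0 by blast
    hence Z: "(\<Prod>i=0..<N. ent i i) = 0" using i by (intro prod_zero) auto
    have "Tskew ?q n w la mu = 0" by (simp only: T D Z)
    thus ?thesis by (simp only: if_not_P[OF False])
  qed
qed

end
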